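(* Let $J_1,J_2\ge 0$ and $\beta\ge 0$. Then every infinite-volume Gibbs measure $\mu$ of the plaquette orbital model on $\mathbb Z^2$ at inverse temperature $\beta$ satisfies $\mathbb E_\mu(\mathbf S_{\boldsymbol r})=0$ for every $\boldsymbol r\in\mathbb Z^2$.
   Context: On $\mathbb Z^2$ (unit vectors $\boldsymbol e_1,\boldsymbol e_2$) nearest-neighbour edges are typed as follows: the horizontal edge $\langle \boldsymbol r,\boldsymbol r+\boldsymbol e_1\rangle$ is an $x$-edge if $r_1$ is even and a $z$-edge if $r_1$ is odd; the vertical edge $\langle\boldsymbol r,\boldsymbol r+\boldsymbol e_2\rangle$ is an $x$-edge if $r_2$ is even and a $z$-edge if $r_2$ is odd. Spins $\mathbf S_{\boldsymbol r}=(S^x_{\boldsymbol r},S^z_{\boldsymbol r})$ are unit vectors in $\mathbb R^2$, with a priori measure $\nu$ = uniform measure on the unit circle (normalized to total mass $\sqrt{2\pi}$). For finite $\Lambda\subset\mathbb Z^2$ let $\mathcal H_\Lambda(\mathbf S)=-J_1\sum S^x_{\boldsymbol r}S^x_{\boldsymbol r'}-J_2\sum S^z_{\boldsymbol r}S^z_{\boldsymbol r'}$, the first sum over $x$-edges and the second over $z$-edges having at least one endpoint in $\Lambda$. An infinite-volume Gibbs measure at inverse temperature $\beta$ is a probability measure $\mu$ on configurations $(\mathbf S_{\boldsymbol r})_{\boldsymbol r\in\mathbb Z^2}$ such that for every finite $\Lambda$, the conditional distribution of $(\mathbf S_{\boldsymbol r})_{\boldsymbol r\in\Lambda}$ given $(\mathbf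 S_{\boldsymbol r})_{\boldsymbol r\notin\Lambda}$ has density proportional to $e^{-\beta\mathcal H_\Lambda(\mathbf S)}$ with respect to $\prod_{\boldsymbol r\in\Lambda}\nu(d\mathbf S_{\boldsymbol r})$ (DLR condition). *)

theory Defs
  imports "HOL-Probability.Probability"
begin

type_synonym site = "int \<times> int"
type_synonym spin = "real \<times> real"   \<comment> \<open>(S^x, S^z)\<close>
type_synonym config = "site \<Rightarrow> spin"

definition spin_apriori :: "spin measure" where
  "spin_apriori = scale_measure (ennreal (sqrt (2*pi) / (2*pi)))
     (distr (restrict_space lborel {0..<2*pi}) borel (\<lambda>\<theta>. (cos \<theta>, sin \<theta>)))"

definition config_space :: "config measure" where
  "config_space = Pi\<^sub>M UNIV (\<lambda>_. borel)"

text \<open>Bond energy of the edge from r to r'; isx = True means an x-edge (coupling J1 S^x S^x),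
  otherwise a z-edge (coupling J2 S^z S^z).\<close>
definition bond :: "real \<Rightarrow> real \<Rightarrow> bool \<Rightarrow> spin \<Rightarrow> spin \<Rightarrow> real" where
  "bond J1 J2 isx a b = (if isx then J1 * fst a * fst b else J2 * snd a * snd b)"

text \<open>Horizontal edges <r, r+e1> with at least one endpoint in Lambda (indexed by r);
  such an edge is an x-edge iff r_1 is even. Vertical edges <r, r+e2>: x-edge iff r_2 even.\<close>
definition hedges :: "site set \<Rightarrow> site set" where
  "hedges \<Lambda> = {r. r \<in> \<Lambda> \<or> (fst r + 1, snd r) \<in> \<Lambda>}"

definition vedges :: "site set \<Rightarrow> site set" where
  "vedges \<Lambda> = {r. r \<in> \<Lambda> \<or> (fst r, snd r + 1) \<in> \<Lambda>}"

definition hamiltonian :: "real \<Rightarrow> real \<Rightarrow> site set \<Rightarrow> config \<Rightarrow> real" where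
  "hamiltonian J1 J2 \<Lambda> S =
     - (\<Sum>r\<in>hedges \<Lambda>. bond J1 J2 (even (fst r)) (S r) (S (fst r + 1, snd r)))
     - (\<Sum>r\<in>vedges \<Lambda>. bond J1 J2 (even (snd r)) (S r) (S (fst r, snd r + 1)))"

definition merge_cfg :: "site set \<Rightarrow> config \<Rightarrow> config \<Rightarrow> config" where
  "merge_cfg \<Lambda> \<sigma> \<omega> = (\<lambda>r. if r \<in> \<Lambda> then \<sigma> r else \<omega> r)"

definition boltz :: "real \<Rightarrow> real \<Rightarrow> real \<Rightarrow> site set \<Rightarrow> config \<Rightarrow> config \<Rightarrow> real" where
  "boltz J1 J2 \<beta> \<Lambda> \<omega> \<sigma> = exp (- \<beta> * hamiltonian J1 J2 \<Lambda> (merge_cfg \<Lambda> \<sigma> \<omega>))"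

definition partition_fn :: "real \<Rightarrow> real \<Rightarrow> real \<Rightarrow> site set \<Rightarrow> config \<Rightarrow> real" where
  "partition_fn J1 J2 \<beta> \<Lambda> \<omega> =
     (\<integral>\<sigma>. boltz J1 J2 \<beta> \<Lambda> \<omega> \<sigma> \<partial>(Pi\<^sub>M \<Lambda> (\<lambda>_. spin_apriori)))"

definition outside_algebra :: "site set \<Rightarrow> config measure" where
  "outside_algebra \<Lambda> = sigma (space config_space)
     {{\<omega> \<in> space config_space. \<omega> r \<in> A} | r A. r \<notin> \<Lambda> \<and> A \<in> sets (borel :: spin measure)}"

definition is_gibbs :: "real \<Rightarrow> real \<Rightarrow> real \<Rightarrow> config measure \<Rightarrow> bool" where
  "is_gibbs J1 J2 \<beta> \<mu> \<longleftrightarrow>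
     prob_space \<mu> \<and> sets \<mu> = sets config_space \<and>
     (\<forall>\<Lambda>. finite \<Lambda> \<longrightarrow>
        (\<forall>A \<in> sets (Pi\<^sub>M \<Lambda> (\<lambda>_. (borel :: spin measure))).
           AE \<omega> in \<mu>.
             real_cond_exp \<mu> (outside_algebra \<Lambda>) (\<lambda>\<omega>'. indicator A (restrict \<omega>' \<Lambda>)) \<omega>
             = (\<integral>\<sigma>. indicator A \<sigma> * boltz J1 J2 \<beta> \<Lambda> \<omega> \<sigma> \<partial>(Pi\<^sub>M \<Lambda> (\<lambda>_. spin_apriori)))
               / partition_fn J1 J2 \<beta> \<Lambda> \<omega>))"

end

theory Submission
  imports Defs
begin



lemma refl_lborel:
  assumes "S \<in> sets borel"
  shows "emeasure lborel ((\<lambda>x::real. t - x) -` S) = emeasure lborel S"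
proof -
  have "lborel = density (distr lborel borel (\<lambda>x::real. t + (-1) * x)) (\<lambda>_. ennreal (abs (-1)))"
    by (rule lborel_real_affine) simp
  then have e: "lborel = distr lborel borel (\<lambda>x::real. t - x)"
    by (simp add: density_1)
  have "emeasure lborel S = emeasure (distr lborel borel (\<lambda>x::real. t - x)) S"
    using e by simp
  also have "\<dots> = emeasure lborel ((\<lambda>x::real. t - x) -` S)"
    using assms by (subst emeasure_distr) auto
  finally show ?thesis by simp
qed

definition hh :: "real \<Rightarrow> real \<Rightarrow> real" where
  "hh a x = (if x \<le> a then a - x else a + 2*pi - x)"

lemma hh_pres:
  assumes a: "0 \<le> a" "a < 2*pi" and S: "S \<in> sets borel"
  shows "emeasure lborel {x\<in>{0..<2*pi}. hh a x \<in> S} = emeasure lborel (S \<inter> {0..<2*pi})"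
proof -
  have eq1: "{x\<in>{0..<2*pi}. hh a x \<in> S} =
     (\<lambda>x. a - x) -` (S \<inter> {0..a}) \<union> (\<lambda>x. (a + 2*pi) - x) -` (S \<inter> {a<..<2*pi})"
    using a by (auto simp: hh_def)
  have eq2: "S \<inter> {0..<2*pi} = (S \<inter> {0..a}) \<union> (S \<inter> {a<..<2*pi})"
    using a by auto
  have m1: "(\<lambda>x. a - x) -` (S \<inter> {0..a}) \<in> sets borel"
    using measurable_sets[of "\<lambda>x::real. a - x" borel borel "S \<inter> {0..a}"] S by simp
  have m2: "(\<lambda>x. (a + 2*pi) - x) -` (S \<inter> {a<..<2*pi}) \<in> sets borel"
    using measurable_sets[of "\<lambda>x::real. (a+2*pi) - x" borel borel "S \<inter> {a<..<2*pi}"] S by simp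
  have "emeasure lborel {x\<in>{0..<2*pi}. hh a x \<in> S} =
     emeasure lborel ((\<lambda>x. a - x) -` (S \<inter> {0..a})) + emeasure lborel ((\<lambda>x. (a + 2*pi) - x) -` (S \<inter> {a<..<2*pi}))"
    unfolding eq1 using m1 m2
    by (intro plus_emeasure[symmetric]) auto
  also have "\<dots> = emeasure lborel (S \<inter> {0..a}) + emeasure lborel (S \<inter> {a<..<2*pi})"
  proof -
    have r1: "emeasure lborel ((\<lambda>x. a - x) -` (S \<inter> {0..a})) = emeasure lborel (S \<inter> {0..a})"
      by (rule refl_lborel) (use S in simp)
    have r2: "emeasure lborel ((\<lambda>x. (a + 2*pi) - x) -` (S \<inter> {a<..<2*pi})) = emeasure lborel (S \<inter> {a<..<2*pi})"
      by (rule refl_lborel) (use S in simp)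
    show ?thesis by (simp only: r1 r2)
  qed
  also have "\<dots> = emeasure lborel (S \<inter> {0..<2*pi})"
    unfolding eq2 using S by (intro plus_emeasure) auto
  finally show ?thesis .
qed

lemma spin_inv:
  fixes f :: "spin \<Rightarrow> spin"
  assumes a: "0 \<le> a" "a < 2*pi" and fm: "f \<in> borel_measurable borel"
    and fg: "\<And>x. f (cos x, sin x) = (cos (hh a x), sin (hh a x))"
  shows "distr spin_apriori borel f = spin_apriori"
proof (rule measure_eqI)
  show "sets (distr spin_apriori borel f) = sets spin_apriori"
    by (simp add: spin_apriori_def)
next
  fix X assume "X \<in> sets (distr spin_apriori borel f)"
  then have X: "X \<in> sets borel" by simp
  let ?c = "ennreal (sqrt (2*pi) / (2*pi))"
  let ?g = "\<lambda>x::real. (cos x, sin x)"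
  have gm: "?g \<in> borel_measurable borel" by measurable
  have L: "emeasure (restrict_space lborel {0..<2*pi}) Z = emeasure lborel Z" if "Z \<subseteq> {0..<2*pi}" for Z
    using that by (intro emeasure_restrict_space) auto
  have sp: "space spin_apriori = UNIV" by (simp add: spin_apriori_def space_scale_measure)
  have gmL: "?g \<in> measurable (restrict_space lborel {0..<2*pi}) borel"
    using gm by (intro measurable_restrict_space1) simp
  have E: "emeasure spin_apriori Y = ?c * emeasure lborel (?g -` Y \<inter> {0..<2*pi})" if Y: "Y \<in> sets borel" for Y
  proof -
    have "emeasure spin_apriori Y = ?c * emeasure (distr (restrict_space lborel {0..<2*pi}) borel ?g) Y"
      unfolding spin_apriori_def by simp
    also have "emeasure (distr (restrict_space lborel {0..<2*pi}) borel ?g) Y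
       = emeasure (restrict_space lborel {0..<2*pi}) (?g -` Y \<inter> {0..<2*pi})"
      using gmL Y by (subst emeasure_distr) (auto simp: space_restrict_space)
    also have "\<dots> = emeasure lborel (?g -` Y \<inter> {0..<2*pi})"
      by (rule L) auto
    finally show ?thesis .
  qed
  have fX: "f -` X \<in> sets borel"
    using measurable_sets[OF fm X] by simp
  have "emeasure (distr spin_apriori borel f) X = emeasure spin_apriori (f -` X)"
    using X fm sp by (subst emeasure_distr) (auto simp: spin_apriori_def)
  also have "\<dots> = ?c * emeasure lborel {x\<in>{0..<2*pi}. f (?g x) \<in> X}"
    using E[OF fX] by (simp add: Int_def conj_commute)
  also have "{x\<in>{0..<2*pi}. f (?g x) \<in> X} = {x\<in>{0..<2*pi}. hh a x \<in> ?g -` X}"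
    by (simp add: fg)
  also have "emeasure lborel \<dots> = emeasure lborel (?g -` X \<inter> {0..<2*pi})"
    using X gm by (intro hh_pres a) (use measurable_sets[OF gm X] in simp)
  also have "?c * \<dots> = emeasure spin_apriori X"
    using E[OF X] by simp
  finally show "emeasure (distr spin_apriori borel f) X = emeasure spin_apriori X" .
qed

definition fx :: "spin \<Rightarrow> spin" where "fx s = (- fst s, snd s)"
definition fz :: "spin \<Rightarrow> spin" where "fz s = (fst s, - snd s)"

lemma fx_meas[measurable]: "fx \<in> borel_measurable borel" unfolding fx_def by (intro borel_measurable_continuous_onI continuous_intros)
lemma fz_meas[measurable]: "fz \<in> borel_measurable borel" unfolding fz_def by (intro borel_measurable_continuous_onI continuous_intros)

lemma fx_inv: "distr spin_apriori borel fx = spin_apriori"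
  by (rule spin_inv[of pi]) (auto simp: fx_def simp: fx_def hh_def cos_diff sin_diff cos_add sin_add)

lemma fz_inv: "distr spin_apriori borel fz = spin_apriori"
  by (rule spin_inv[of 0]) (auto simp: fz_def simp: fz_def hh_def cos_diff sin_diff cos_add sin_add)

lemma sets_nu[simp]: "sets spin_apriori = sets borel"
  by (simp add: spin_apriori_def)
lemma space_nu[simp]: "space spin_apriori = UNIV"
  by (simp add: spin_apriori_def space_scale_measure)

lemma fin_nu: "finite_measure spin_apriori"
proof (rule finite_measureI)
  let ?g = "\<lambda>x::real. (cos x, sin x)"
  have gmL: "?g \<in> measurable (restrict_space lborel {0..<2*pi}) borel"
    by (intro measurable_restrict_space1) simp
  have "emeasure spin_apriori (space spin_apriori)
     = ennreal (sqrt (2*pi) / (2*pi)) * emeasure (restrict_space lborel {0..<2*pi}) (?g -` UNIV \<inter> {0..<2*pi})"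
    unfolding spin_apriori_def using gmL by (simp add: space_scale_measure emeasure_distr space_restrict_space)
  also have "emeasure (restrict_space lborel {0..<2*pi}) (?g -` UNIV \<inter> {0..<2*pi}) = emeasure lborel {0..<2*pi}"
    by (subst emeasure_restrict_space) auto
  also have "\<dots> = ennreal (2*pi)" by simp
  finally show "emeasure spin_apriori (space spin_apriori) \<noteq> \<infinity>"
    by (simp add: ennreal_mult_eq_top_iff)
qed

interpretation nu_psf: product_sigma_finite "\<lambda>_::site. spin_apriori"
  unfolding product_sigma_finite_def
  using fin_nu by (simp add: finite_measure_def)

lemma sets_PiM_nu[simp]: "sets (PiM P (\<lambda>_. spin_apriori)) = sets (PiM P (\<lambda>_. borel))"
  by (rule sets_PiM_cong) auto

lemma meas_PiM_nu_iff:
  "measurable (PiM P (\<lambda>_. spin_apriori)) N = measurable (PiM P (\<lambda>_. borel)) N"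
  by (rule measurable_cong_sets) auto

lemma T_meas:
  fixes P :: "site set"
  assumes fm: "f \<in> borel_measurable borel"
  shows "(\<lambda>\<sigma>. restrict (\<lambda>i. f (\<sigma> i)) P) \<in> measurable (PiM P (\<lambda>_. spin_apriori)) (PiM P (\<lambda>_. spin_apriori))"
    unfolding meas_PiM_nu_iff
  proof (rule measurable_restrict)
    fix i assume i: "i \<in> P"
    have e: "measurable (borel::spin measure) spin_apriori = measurable (borel::spin measure) (borel::spin measure)"
      by (rule measurable_cong_sets) auto
    have fm': "f \<in> measurable borel spin_apriori" using fm unfolding e .
    show "(\<lambda>x. f (x i)) \<in> measurable (PiM P (\<lambda>_. borel)) spin_apriori"
      by (rule measurable_compose[OF measurable_component_singleton[OF i] fm'])
  qed

lemma nu_E: 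
  assumes Y: "Y \<in> sets borel"
  shows "emeasure spin_apriori Y = ennreal (sqrt (2*pi) / (2*pi)) * emeasure lborel ((\<lambda>x::real. (cos x, sin x)) -` Y \<inter> {0..<2*pi})"
proof -
  let ?g = "\<lambda>x::real. (cos x, sin x)"
  have gmL: "?g \<in> measurable (restrict_space lborel {0..<2*pi}) borel"
    by (intro measurable_restrict_space1) simp
  have "emeasure spin_apriori Y = ennreal (sqrt (2*pi) / (2*pi)) * emeasure (distr (restrict_space lborel {0..<2*pi}) borel ?g) Y"
    unfolding spin_apriori_def by simp
  also have "emeasure (distr (restrict_space lborel {0..<2*pi}) borel ?g) Y
     = emeasure (restrict_space lborel {0..<2*pi}) (?g -` Y \<inter> {0..<2*pi})"
    using gmL Y by (subst emeasure_distr) (auto simp: space_restrict_space)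
  also have "\<dots> = emeasure lborel (?g -` Y \<inter> {0..<2*pi})"
    by (subst emeasure_restrict_space) auto
  finally show ?thesis .
qed

lemma prod_inv:
  fixes P :: "site set"
  assumes P: "finite P" and fm: "f \<in> borel_measurable borel" and inv: "distr spin_apriori borel f = spin_apriori"
  shows "distr (PiM P (\<lambda>_. spin_apriori)) (PiM P (\<lambda>_. spin_apriori)) (\<lambda>\<sigma>. restrict (\<lambda>i. f (\<sigma> i)) P)
         = PiM P (\<lambda>_. spin_apriori)"
proof (rule nu_psf.PiM_eqI[OF P])
  let ?T = "\<lambda>\<sigma>. restrict (\<lambda>i. f (\<sigma> i)) P"
  have Tm: "?T \<in> measurable (PiM P (\<lambda>_. spin_apriori)) (PiM P (\<lambda>_. spin_apriori))"
    unfolding meas_PiM_nu_iff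
  proof (rule measurable_restrict)
    fix i assume i: "i \<in> P"
    have e: "measurable (borel::spin measure) spin_apriori = measurable (borel::spin measure) (borel::spin measure)"
      by (rule measurable_cong_sets) auto
    have fm': "f \<in> measurable borel spin_apriori" using fm unfolding e .
    show "(\<lambda>x. f (x i)) \<in> measurable (PiM P (\<lambda>_. borel)) spin_apriori"
      by (rule measurable_compose[OF measurable_component_singleton[OF i] fm'])
  qed
  show "sets (distr (PiM P (\<lambda>_. spin_apriori)) (PiM P (\<lambda>_. spin_apriori)) ?T) = sets (PiM P (\<lambda>_. spin_apriori))"
    by simp
  fix A assume A: "\<And>i. i \<in> P \<Longrightarrow> A i \<in> sets spin_apriori"
  have fA: "f -` A i \<in> sets spin_apriori" if "i \<in> P" for i
    using measurable_sets[OF fm, of "A i"] A[OF that] by simp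
  have pre: "?T -` PiE P A \<inter> space (PiM P (\<lambda>_. spin_apriori)) = PiE P (\<lambda>i. f -` A i)"
    by (auto simp: space_PiM PiE_iff)
  have "emeasure (distr (PiM P (\<lambda>_. spin_apriori)) (PiM P (\<lambda>_. spin_apriori)) ?T) (PiE P A)
      = emeasure (PiM P (\<lambda>_. spin_apriori)) (PiE P (\<lambda>i. f -` A i))"
    using Tm A by (subst emeasure_distr) (auto simp: pre intro!: sets_PiM_I_finite P)
  also have "\<dots> = (\<Prod>i\<in>P. emeasure spin_apriori (f -` A i))"
    using fA P by (simp add: nu_psf.emeasure_PiM)
  also have "\<dots> = (\<Prod>i\<in>P. emeasure spin_apriori (A i))"
  proof (rule prod.cong[OF refl])
    fix i assume i: "i \<in> P"
    have "emeasure spin_apriori (A i) = emeasure (distr spin_apriori borel f) (A i)"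
      by (simp add: inv)
    also have "\<dots> = emeasure spin_apriori (f -` A i)"
    proof -
      have "measurable spin_apriori (borel::spin measure) = measurable (borel::spin measure) (borel::spin measure)"
        by (rule measurable_cong_sets) auto
      then have fm2: "f \<in> measurable spin_apriori borel" using fm by simp
      show ?thesis using fm2 A[OF i] by (subst emeasure_distr) auto
    qed
    finally show "emeasure spin_apriori (f -` A i) = emeasure spin_apriori (A i)" by simp
  qed
  finally show "emeasure (distr (PiM P (\<lambda>_. spin_apriori)) (PiM P (\<lambda>_. spin_apriori)) ?T) (PiE P A)
      = (\<Prod>i\<in>P. emeasure spin_apriori (A i))" .
qed




lemma space_config[simp]: "space config_space = UNIV"
  by (simp add: config_space_def space_PiM)

lemma gibbs_facts:
  assumes "is_gibbs J1 J2 \<beta> \<mu>"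
  shows "prob_space \<mu>" "sets \<mu> = sets config_space" "space \<mu> = UNIV"
  using assms unfolding is_gibbs_def
  by (auto dest: sets_eq_imp_space_eq)

lemma subalg_outside:
  assumes "sets \<mu> = sets config_space"
  shows "subalgebra \<mu> (outside_algebra P)"
proof -
  have sp: "space \<mu> = UNIV" using sets_eq_imp_space_eq[OF assms] by simp
  let ?G = "{{\<omega> \<in> space config_space. \<omega> r \<in> A} | r A. r \<notin> P \<and> A \<in> sets (borel :: spin measure)}"
  have G: "?G \<subseteq> Pow (space config_space)" by auto
  have "?G \<subseteq> sets config_space"
  proof
    fix X assume "X \<in> ?G"
    then obtain r A where X: "X = {\<omega> \<in> space config_space. \<omega> r \<in> A}" and A: "A \<in> sets (borel :: spin measure)"
      by blast
    have "(\<lambda>\<omega>::config. \<omega> r) \<in> measurable config_space borel"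
      unfolding config_space_def by (rule measurable_component_singleton) simp
    from measurable_sets[OF this A] show "X \<in> sets config_space" unfolding X
      by (simp add: vimage_def Int_def conj_commute)
  qed
  then have "sets (outside_algebra P) \<subseteq> sets config_space"
    unfolding outside_algebra_def using G sets.top[of config_space] by (subst sigma_le_sets) auto
  moreover have "space (outside_algebra P) = space config_space"
    unfolding outside_algebra_def using G by simp
  ultimately show ?thesis unfolding subalgebra_def using assms sp by simp
qed

lemma dlr_eq:
  assumes g: "is_gibbs J1 J2 \<beta> \<mu>" and P: "finite P"
    and A: "A \<in> sets (PiM P (\<lambda>_. (borel :: spin measure)))"
    and A': "A' \<in> sets (PiM P (\<lambda>_. (borel :: spin measure)))"
    and eq: "\<And>\<omega>. (\<integral>\<sigma>. indicator A \<sigma> * boltz J1 J2 \<beta> P \<omega> \<sigma> \<partial>(Pi\<^sub>M P (\<lambda>_. spin_apriori)))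
              = (\<integral>\<sigma>. indicator A' \<sigma> * boltz J1 J2 \<beta> P \<omega> \<sigma> \<partial>(Pi\<^sub>M P (\<lambda>_. spin_apriori)))"
  shows "measure \<mu> {\<omega>. restrict \<omega> P \<in> A} = measure \<mu> {\<omega>. restrict \<omega> P \<in> A'}"
proof -
  note gf = gibbs_facts[OF g]
  interpret prob_space \<mu> by (rule gf(1))
  interpret fms: finite_measure_subalgebra \<mu> "outside_algebra P"
    by unfold_locales (rule subalg_outside[OF gf(2)])
  have resm: "(\<lambda>\<omega>. restrict \<omega> P) \<in> measurable \<mu> (PiM P (\<lambda>_. (borel :: spin measure)))"
  proof -
    have "(\<lambda>\<omega>::config. restrict \<omega> P) \<in> measurable config_space (PiM P (\<lambda>_. (borel :: spin measure)))"
      unfolding config_space_def by (rule measurable_restrict_subset) simp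
    then show ?thesis by (rule measurable_cong_sets[OF gf(2) refl, THEN eqset_imp_iff, THEN iffD2])
  qed
  have indeq: "(\<lambda>\<omega>::config. (indicator X (restrict \<omega> P) :: real)) = (indicator {\<omega>. restrict \<omega> P \<in> X} :: config \<Rightarrow> real)" for X
    by (rule ext) (simp add: indicator_def)
  have key: "(\<integral>\<omega>. (indicator X (restrict \<omega> P) :: real) \<partial>\<mu>) = measure \<mu> {\<omega>. restrict \<omega> P \<in> X}" for X
  proof -
    have "(\<integral>\<omega>. indicator X (restrict \<omega> P) \<partial>\<mu>) = (\<integral>\<omega>. indicator {\<omega>. restrict \<omega> P \<in> X} \<omega> \<partial>\<mu>)"
      by (intro Bochner_Integration.integral_cong refl) (simp add: indicator_def)
    also have "\<dots> = measure \<mu> ({\<omega>. restrict \<omega> P \<in> X} \<inter> space \<mu>)"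
      by (rule Bochner_Integration.integral_indicator)
    finally show ?thesis by (simp only: gf(3) Int_UNIV_right)
  qed
  have intg: "integrable \<mu> (\<lambda>\<omega>. indicator X (restrict \<omega> P) :: real)"
    if X: "X \<in> sets (PiM P (\<lambda>_. (borel :: spin measure)))" for X
  proof -
    have S: "{\<omega>. restrict \<omega> P \<in> X} \<in> sets \<mu>"
      using measurable_sets[OF resm X] gf(3) by (simp add: vimage_def)
    have "emeasure \<mu> {\<omega>. restrict \<omega> P \<in> X} < \<infinity>"
      using emeasure_finite[of "{\<omega>. restrict \<omega> P \<in> X}"] by (simp only: less_top infinity_ennreal_def)
    then have "integrable \<mu> (indicator {\<omega>. restrict \<omega> P \<in> X} :: config \<Rightarrow> real)"
      by (rule integrable_real_indicator[OF S])
    then show ?thesis by (subst indeq)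
  qed
  let ?ce = "\<lambda>X. real_cond_exp \<mu> (outside_algebra P) (\<lambda>\<omega>'. indicator X (restrict \<omega>' P))"
  let ?ga = "\<lambda>X \<omega>. (\<integral>\<sigma>. indicator X \<sigma> * boltz J1 J2 \<beta> P \<omega> \<sigma> \<partial>(Pi\<^sub>M P (\<lambda>_. spin_apriori)))
               / partition_fn J1 J2 \<beta> P \<omega>"
  have dlr: "AE \<omega> in \<mu>. ?ce X \<omega> = ?ga X \<omega>" if "X \<in> sets (PiM P (\<lambda>_. (borel :: spin measure)))" for X
    using conjunct2[OF conjunct2[OF g[unfolded is_gibbs_def]], rule_format, OF P that] .
  have "AE \<omega> in \<mu>. ?ce A \<omega> = ?ce A' \<omega>"
    using dlr[OF A] dlr[OF A'] by eventually_elim (simp add: eq)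
  then have "(\<integral>\<omega>. ?ce A \<omega> \<partial>\<mu>) = (\<integral>\<omega>. ?ce A' \<omega> \<partial>\<mu>)"
    by (rule integral_cong_AE[OF borel_measurable_cond_exp2 borel_measurable_cond_exp2])
  then have "(\<integral>\<omega>. (indicator A (restrict \<omega> P) :: real) \<partial>\<mu>) = (\<integral>\<omega>. (indicator A' (restrict \<omega> P) :: real) \<partial>\<mu>)"
    using fms.real_cond_exp_int(2)[OF intg[OF A]] fms.real_cond_exp_int(2)[OF intg[OF A']] by simp
  then show ?thesis using key[of A] key[of A'] by simp
qed




lemma merge_meas:
  "(\<lambda>\<sigma>. merge_cfg P \<sigma> \<omega> s) \<in> measurable (PiM P (\<lambda>_. borel)) (borel :: spin measure)"
proof (cases "s \<in> P")
  case True
  then show ?thesis unfolding merge_cfg_def by (simp add: measurable_component_singleton)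
next
  case False
  then show ?thesis unfolding merge_cfg_def by simp
qed

lemma merge_fst[measurable]:
  "(\<lambda>\<sigma>. fst (merge_cfg P \<sigma> \<omega> s)) \<in> borel_measurable (PiM P (\<lambda>_. borel :: spin measure))"
  by (rule measurable_compose[OF merge_meas]) (intro borel_measurable_continuous_onI continuous_intros)

lemma merge_snd[measurable]:
  "(\<lambda>\<sigma>. snd (merge_cfg P \<sigma> \<omega> s)) \<in> borel_measurable (PiM P (\<lambda>_. borel :: spin measure))"
  by (rule measurable_compose[OF merge_meas]) (intro borel_measurable_continuous_onI continuous_intros)

lemma bond_meas[measurable]:
  "(\<lambda>\<sigma>. bond J1 J2 b (merge_cfg P \<sigma> \<omega> s) (merge_cfg P \<sigma> \<omega> t)) \<in> borel_measurable (PiM P (\<lambda>_. borel :: spin measure))"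
  unfolding bond_def by (cases b) simp_all

lemma boltz_meas[measurable]:
  "(\<lambda>\<sigma>. boltz J1 J2 \<beta> P \<omega> \<sigma>) \<in> borel_measurable (PiM P (\<lambda>_. borel :: spin measure))"
  unfolding boltz_def hamiltonian_def by measurable




lemma ham_inv:
  fixes f :: "spin \<Rightarrow> spin" and c :: bool
  assumes hcl: "\<And>s. even (fst s) = c \<Longrightarrow> (s \<in> P \<longleftrightarrow> (fst s + 1, snd s) \<in> P)"
    and vcl: "\<And>s. even (snd s) = c \<Longrightarrow> (s \<in> P \<longleftrightarrow> (fst s, snd s + 1) \<in> P)"
    and fb: "\<And>x y. bond J1 J2 c (f x) (f y) = bond J1 J2 c x y"
    and fu1: "\<And>x y. bond J1 J2 (\<not> c) (f x) y = bond J1 J2 (\<not> c) x y"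
    and fu2: "\<And>x y. bond J1 J2 (\<not> c) x (f y) = bond J1 J2 (\<not> c) x y"
  shows "hamiltonian J1 J2 P (merge_cfg P (\<lambda>i. f (\<sigma> i)) \<omega>) = hamiltonian J1 J2 P (merge_cfg P \<sigma> \<omega>)"
proof -
  have gen: "bond J1 J2 b (merge_cfg P (\<lambda>i. f (\<sigma> i)) \<omega> s) (merge_cfg P (\<lambda>i. f (\<sigma> i)) \<omega> t)
           = bond J1 J2 b (merge_cfg P \<sigma> \<omega> s) (merge_cfg P \<sigma> \<omega> t)"
    if st: "b = c \<Longrightarrow> (s \<in> P \<longleftrightarrow> t \<in> P)" for b s t
  proof (cases "b = c")
    case True
    then show ?thesis using st fb by (auto simp: merge_cfg_def)
  next
    case False
    then have b: "b = (\<not> c)" by auto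
    show ?thesis unfolding b merge_cfg_def using fu1 fu2 by auto
  qed
  show ?thesis unfolding hamiltonian_def
    by (intro arg_cong2[where f="(-)"] arg_cong[where f=uminus] sum.cong refl gen)
       (use hcl vcl in auto)
qed

definition plx :: "site \<Rightarrow> site set" where
  "plx r = {s. fst s div 2 = fst r div 2 \<and> snd s div 2 = snd r div 2}"
definition plz :: "site \<Rightarrow> site set" where
  "plz r = {s. (fst s - 1) div 2 = (fst r - 1) div 2 \<and> (snd s - 1) div 2 = (snd r - 1) div 2}"

lemma plx_in: "r \<in> plx r" by (simp add: plx_def)
lemma plz_in: "r \<in> plz r" by (simp add: plz_def)

lemma plx_fin: "finite (plx r)"
proof (rule finite_subset)
  show "plx r \<subseteq> {2*(fst r div 2) .. 2*(fst r div 2)+1} \<times> {2*(snd r div 2) .. 2*(snd r div 2)+1}"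
    unfolding plx_def by (auto; presburger)
qed simp

lemma plz_fin: "finite (plz r)"
proof (rule finite_subset)
  show "plz r \<subseteq> {2*((fst r - 1) div 2)+1 .. 2*((fst r - 1) div 2)+2} \<times> {2*((snd r - 1) div 2)+1 .. 2*((snd r - 1) div 2)+2}"
    unfolding plz_def by (auto; presburger)
qed simp

lemma plx_hcl: "even (fst s) = True \<Longrightarrow> (s \<in> plx r \<longleftrightarrow> (fst s + 1, snd s) \<in> plx r)"
  unfolding plx_def by (auto; presburger)
lemma plx_vcl: "even (snd s) = True \<Longrightarrow> (s \<in> plx r \<longleftrightarrow> (fst s, snd s + 1) \<in> plx r)"
  unfolding plx_def by (auto; presburger)
lemma plz_hcl: "even (fst s) = False \<Longrightarrow> (s \<in> plz r \<longleftrightarrow> (fst s + 1, snd s) \<in> plz r)"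
  unfolding plz_def by (auto; presburger)
lemma plz_vcl: "even (snd s) = False \<Longrightarrow> (s \<in> plz r \<longleftrightarrow> (fst s, snd s + 1) \<in> plz r)"
  unfolding plz_def by (auto; presburger)




lemma setA_meas:
  assumes "r \<in> P" "B \<in> sets (borel :: spin measure)"
  shows "{\<sigma> \<in> space (PiM P (\<lambda>_. borel :: spin measure)). \<sigma> r \<in> B} \<in> sets (PiM P (\<lambda>_. borel :: spin measure))"
  using measurable_sets[OF measurable_component_singleton[OF assms(1)] assms(2)]
  by (simp add: vimage_def Int_def conj_commute)

lemma bridge:
  assumes "r \<in> P"
  shows "{\<omega>::config. restrict \<omega> P \<in> {\<sigma> \<in> space (PiM P (\<lambda>_. borel :: spin measure)). \<sigma> r \<in> B}} = {\<omega>. \<omega> r \<in> B}"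
  using assms by (auto simp: space_PiM)

lemma sym_measure:
  assumes g: "is_gibbs J1 J2 \<beta> \<mu>" and P: "finite P" and r: "r \<in> P"
    and fm: "f \<in> borel_measurable borel" and inv: "distr spin_apriori borel f = spin_apriori"
    and H: "\<And>\<sigma> \<omega>. hamiltonian J1 J2 P (merge_cfg P (\<lambda>i. f (\<sigma> i)) \<omega>) = hamiltonian J1 J2 P (merge_cfg P \<sigma> \<omega>)"
    and B: "B \<in> sets borel"
  shows "measure \<mu> {\<omega>. \<omega> r \<in> B} = measure \<mu> {\<omega>. f (\<omega> r) \<in> B}"
proof -
  let ?S = "space (PiM P (\<lambda>_. borel :: spin measure))"
  let ?A = "{\<sigma> \<in> ?S. \<sigma> r \<in> B}"
  let ?A' = "{\<sigma> \<in> ?S. \<sigma> r \<in> f -` B}"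
  have fB: "f -` B \<in> sets borel" using measurable_sets[OF fm B] by simp
  have A: "?A \<in> sets (PiM P (\<lambda>_. borel :: spin measure))" by (rule setA_meas[OF r B])
  have A': "?A' \<in> sets (PiM P (\<lambda>_. borel :: spin measure))" by (rule setA_meas[OF r fB])
  let ?T = "\<lambda>\<sigma>. restrict (\<lambda>i. f (\<sigma> i)) P"
  have Tm: "?T \<in> measurable (PiM P (\<lambda>_. spin_apriori)) (PiM P (\<lambda>_. spin_apriori))"
    by (rule T_meas[OF fm])
  have eq: "(\<integral>\<sigma>. indicator ?A \<sigma> * boltz J1 J2 \<beta> P \<omega> \<sigma> \<partial>(Pi\<^sub>M P (\<lambda>_. spin_apriori)))
              = (\<integral>\<sigma>. indicator ?A' \<sigma> * boltz J1 J2 \<beta> P \<omega> \<sigma> \<partial>(Pi\<^sub>M P (\<lambda>_. spin_apriori)))" for \<omega>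
  proof -
    have im: "(\<lambda>\<sigma>. indicator ?A \<sigma> * boltz J1 J2 \<beta> P \<omega> \<sigma>) \<in> borel_measurable (PiM P (\<lambda>_. spin_apriori))"
      unfolding meas_PiM_nu_iff using A by measurable
    have "(\<integral>\<sigma>. indicator ?A \<sigma> * boltz J1 J2 \<beta> P \<omega> \<sigma> \<partial>(Pi\<^sub>M P (\<lambda>_. spin_apriori)))
       = (\<integral>\<sigma>. indicator ?A \<sigma> * boltz J1 J2 \<beta> P \<omega> \<sigma> \<partial>(distr (Pi\<^sub>M P (\<lambda>_. spin_apriori)) (Pi\<^sub>M P (\<lambda>_. spin_apriori)) ?T))"
      by (simp add: prod_inv[OF P fm inv])
    also have "\<dots> = (\<integral>\<sigma>. indicator ?A (?T \<sigma>) * boltz J1 J2 \<beta> P \<omega> (?T \<sigma>) \<partial>(Pi\<^sub>M P (\<lambda>_. spin_apriori)))"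
      by (rule integral_distr[OF Tm im])
    also have "\<dots> = (\<integral>\<sigma>. indicator ?A' \<sigma> * boltz J1 J2 \<beta> P \<omega> \<sigma> \<partial>(Pi\<^sub>M P (\<lambda>_. spin_apriori)))"
    proof (rule Bochner_Integration.integral_cong[OF refl])
      fix \<sigma> assume \<sigma>: "\<sigma> \<in> space (Pi\<^sub>M P (\<lambda>_. spin_apriori))"
      have m: "merge_cfg P (?T \<sigma>) \<omega> = merge_cfg P (\<lambda>i. f (\<sigma> i)) \<omega>"
        by (auto simp: merge_cfg_def)
      have b: "boltz J1 J2 \<beta> P \<omega> (?T \<sigma>) = boltz J1 J2 \<beta> P \<omega> \<sigma>"
        unfolding boltz_def m H ..
      have i: "indicator ?A (?T \<sigma>) = (indicator ?A' \<sigma> :: real)"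
        using \<sigma> r by (auto simp: indicator_def space_PiM)
      show "indicator ?A (?T \<sigma>) * boltz J1 J2 \<beta> P \<omega> (?T \<sigma>) = indicator ?A' \<sigma> * boltz J1 J2 \<beta> P \<omega> \<sigma>"
        by (simp only: b i)
    qed
    finally show ?thesis .
  qed
  have "measure \<mu> {\<omega>. restrict \<omega> P \<in> ?A} = measure \<mu> {\<omega>. restrict \<omega> P \<in> ?A'}"
    by (rule dlr_eq[OF g P A A' eq])
  then show ?thesis unfolding bridge[OF r] by simp
qed




definition Cb :: "spin set" where "Cb = {s. \<bar>fst s\<bar> \<le> 1 \<and> \<bar>snd s\<bar> \<le> 1}"

lemma Cb_borel: "- Cb \<in> sets borel"
proof -
  have "closed Cb" unfolding Cb_def
    by (intro closed_Collect_conj closed_Collect_le continuous_intros)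
  then show ?thesis by (intro borel_open) (simp add: open_Compl)
qed

lemma nu_Cb: "emeasure spin_apriori (- Cb) = 0"
proof -
  have "(\<lambda>x::real. (cos x, sin x)) -` (- Cb) = {}"
    by (auto simp: Cb_def abs_cos_le_one abs_sin_le_one)
  then show ?thesis using nu_E[OF Cb_borel] by simp
qed

lemma support:
  assumes g: "is_gibbs J1 J2 \<beta> \<mu>"
  shows "measure \<mu> {\<omega>. \<omega> r \<in> - Cb} = 0"
proof -
  let ?P = "{r}"
  let ?S = "space (PiM ?P (\<lambda>_. borel :: spin measure))"
  let ?A = "{\<sigma> \<in> ?S. \<sigma> r \<in> - Cb}"
  let ?A' = "{\<sigma> \<in> ?S. \<sigma> r \<in> {}}"
  have A: "?A \<in> sets (PiM ?P (\<lambda>_. borel :: spin measure))" by (rule setA_meas[OF _ Cb_borel]) simp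
  have A': "?A' \<in> sets (PiM ?P (\<lambda>_. borel :: spin measure))" by (rule setA_meas) simp_all
  have Aeq: "?A = PiE ?P (\<lambda>_. - Cb)"
    by (auto simp: space_PiM PiE_iff extensional_def)
  have "emeasure (PiM ?P (\<lambda>_. spin_apriori)) ?A = (\<Prod>i\<in>?P. emeasure spin_apriori (- Cb))"
    unfolding Aeq using Cb_borel by (subst nu_psf.emeasure_PiM) auto
  then have null: "?A \<in> null_sets (PiM ?P (\<lambda>_. spin_apriori))"
    using A nu_Cb by (intro null_setsI) auto
  have eq: "(\<integral>\<sigma>. indicator ?A \<sigma> * boltz J1 J2 \<beta> ?P \<omega> \<sigma> \<partial>(Pi\<^sub>M ?P (\<lambda>_. spin_apriori)))
              = (\<integral>\<sigma>. indicator ?A' \<sigma> * boltz J1 J2 \<beta> ?P \<omega> \<sigma> \<partial>(Pi\<^sub>M ?P (\<lambda>_. spin_apriori)))" for \<omega>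
  proof -
    have "(\<integral>\<sigma>. indicator ?A \<sigma> * boltz J1 J2 \<beta> ?P \<omega> \<sigma> \<partial>(Pi\<^sub>M ?P (\<lambda>_. spin_apriori))) = 0"
      by (rule integral_eq_zero_AE, rule AE_I'[OF null]) (auto simp: indicator_def)
    moreover have "(\<integral>\<sigma>. indicator ?A' \<sigma> * boltz J1 J2 \<beta> ?P \<omega> \<sigma> \<partial>(Pi\<^sub>M ?P (\<lambda>_. spin_apriori))) = 0"
      by simp
    ultimately show ?thesis by simp
  qed
  have "measure \<mu> {\<omega>. restrict \<omega> ?P \<in> ?A} = measure \<mu> {\<omega>. restrict \<omega> ?P \<in> ?A'}"
    by (rule dlr_eq[OF g _ A A' eq]) simp
  then show ?thesis by (simp only: bridge[OF singletonI]) simp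
qed

lemma norm_bd:
  assumes "s \<in> Cb" shows "norm (s :: spin) \<le> 2"
proof -
  have "fst s ^ 2 \<le> 1" "snd s ^ 2 \<le> 1" using assms by (auto simp: Cb_def abs_square_le_1)
  then have "(norm (fst s))\<^sup>2 + (norm (snd s))\<^sup>2 \<le> 2 ^ 2" by simp
  then have "sqrt ((norm (fst s))\<^sup>2 + (norm (snd s))\<^sup>2) \<le> sqrt (2 ^ 2)" by (rule real_sqrt_le_mono)
  then show ?thesis by (cases s) (simp add: norm_Pair)
qed

lemma mean_zero_comp:
  fixes f :: "spin \<Rightarrow> spin" and h :: "spin \<Rightarrow> real"
  assumes g: "is_gibbs J1 J2 \<beta> \<mu>" and P: "finite P" and r: "r \<in> P"
    and fm: "f \<in> borel_measurable borel" and inv: "distr spin_apriori borel f = spin_apriori"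
    and H: "\<And>\<sigma> \<omega>. hamiltonian J1 J2 P (merge_cfg P (\<lambda>i. f (\<sigma> i)) \<omega>) = hamiltonian J1 J2 P (merge_cfg P \<sigma> \<omega>)"
    and hm: "h \<in> borel_measurable borel" and hf: "\<And>s. h (f s) = - h s"
  shows "(\<integral>\<omega>. h (\<omega> r) \<partial>\<mu>) = 0"
proof -
  note gf = gibbs_facts[OF g]
  interpret prob_space \<mu> by (rule gf(1))
  have cm: "(\<lambda>\<omega>::config. \<omega> r) \<in> measurable \<mu> borel"
  proof -
    have "(\<lambda>\<omega>::config. \<omega> r) \<in> measurable config_space borel"
      unfolding config_space_def by (rule measurable_component_singleton) simp
    then show ?thesis by (rule measurable_cong_sets[OF gf(2) refl, THEN eqset_imp_iff, THEN iffD2])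
  qed
  have cfm: "(\<lambda>\<omega>::config. f (\<omega> r)) \<in> measurable \<mu> borel"
    by (rule measurable_compose[OF cm fm])
  have D: "distr \<mu> borel (\<lambda>\<omega>. \<omega> r) = distr \<mu> borel (\<lambda>\<omega>. f (\<omega> r))"
  proof (rule measure_eqI)
    fix B assume "B \<in> sets (distr \<mu> borel (\<lambda>\<omega>. \<omega> r))"
    then have B: "B \<in> sets borel" by simp
    have "emeasure (distr \<mu> borel (\<lambda>\<omega>. \<omega> r)) B = emeasure \<mu> {\<omega>. \<omega> r \<in> B}"
      using cm B gf(3) by (subst emeasure_distr) (auto simp: vimage_def)
    also have "\<dots> = ennreal (measure \<mu> {\<omega>. \<omega> r \<in> B})" by (rule emeasure_eq_measure)
    also have "measure \<mu> {\<omega>. \<omega> r \<in> B} = measure \<mu> {\<omega>. f (\<omega> r) \<in> B}"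
      by (rule sym_measure[OF g P r fm inv H B])
    also have "ennreal \<dots> = emeasure \<mu> {\<omega>. f (\<omega> r) \<in> B}" by (rule emeasure_eq_measure[symmetric])
    also have "\<dots> = emeasure (distr \<mu> borel (\<lambda>\<omega>. f (\<omega> r))) B"
      using cfm B gf(3) by (subst emeasure_distr) (auto simp: vimage_def)
    finally show "emeasure (distr \<mu> borel (\<lambda>\<omega>. \<omega> r)) B = emeasure (distr \<mu> borel (\<lambda>\<omega>. f (\<omega> r))) B" .
  qed simp
  have "(\<integral>\<omega>. h (\<omega> r) \<partial>\<mu>) = (\<integral>s. h s \<partial>(distr \<mu> borel (\<lambda>\<omega>. \<omega> r)))"
    by (rule integral_distr[OF cm hm, symmetric])
  also have "\<dots> = (\<integral>s. h s \<partial>(distr \<mu> borel (\<lambda>\<omega>. f (\<omega> r))))" by (simp only: D)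
  also have "\<dots> = (\<integral>\<omega>. h (f (\<omega> r)) \<partial>\<mu>)"
    by (rule integral_distr[OF cfm hm])
  also have "\<dots> = - (\<integral>\<omega>. h (\<omega> r) \<partial>\<mu>)" by (simp add: hf)
  finally show ?thesis by simp
qed

theorem theorem2p2:
  fixes J1 J2 \<beta> :: real and \<mu> :: "config measure"
  assumes "J1 \<ge> 0" and "J2 \<ge> 0" and "\<beta> \<ge> 0"
    and "is_gibbs J1 J2 \<beta> \<mu>"
  shows "\<forall>r. integrable \<mu> (\<lambda>\<omega>. \<omega> r) \<and> (\<integral>\<omega>. \<omega> r \<partial>\<mu>) = (0 :: spin)"
proof
  fix r :: site
  note g = assms(4)
  note gf = gibbs_facts[OF g]
  interpret prob_space \<mu> by (rule gf(1))
  have cm: "(\<lambda>\<omega>::config. \<omega> r) \<in> measurable \<mu> borel"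
  proof -
    have "(\<lambda>\<omega>::config. \<omega> r) \<in> measurable config_space borel"
      unfolding config_space_def by (rule measurable_component_singleton) simp
    then show ?thesis by (rule measurable_cong_sets[OF gf(2) refl, THEN eqset_imp_iff, THEN iffD2])
  qed
  have Sset: "{\<omega>. \<omega> r \<in> - Cb} \<in> sets \<mu>"
    using measurable_sets[OF cm Cb_borel] gf(3) by (simp add: vimage_def)
  have "emeasure \<mu> {\<omega>. \<omega> r \<in> - Cb} = 0"
    using support[OF g, of r] by (simp add: emeasure_eq_measure)
  then have null: "{\<omega>. \<omega> r \<in> - Cb} \<in> null_sets \<mu>"
    using Sset by (intro null_setsI)
  have AEb: "AE \<omega> in \<mu>. \<omega> r \<in> Cb"
    by (rule AE_I'[OF null]) auto
  have int: "integrable \<mu> (\<lambda>\<omega>. \<omega> r)"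
  proof (rule Bochner_Integration.integrable_bound[OF integrable_const[of "2::real"] cm])
    show "AE \<omega> in \<mu>. norm (\<omega> r) \<le> norm (2::real)"
      using AEb by eventually_elim (simp add: norm_bd)
  qed
  have Hx: "hamiltonian J1 J2 (plx r) (merge_cfg (plx r) (\<lambda>i. fx (\<sigma> i)) \<omega>) = hamiltonian J1 J2 (plx r) (merge_cfg (plx r) \<sigma> \<omega>)" for \<sigma> \<omega>
    by (rule ham_inv[where c=True]) (auto simp: plx_hcl plx_vcl bond_def fx_def)
  have Hz: "hamiltonian J1 J2 (plz r) (merge_cfg (plz r) (\<lambda>i. fz (\<sigma> i)) \<omega>) = hamiltonian J1 J2 (plz r) (merge_cfg (plz r) \<sigma> \<omega>)" for \<sigma> \<omega>
    by (rule ham_inv[where c=False]) (auto simp: plz_hcl plz_vcl bond_def fz_def)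
  have fstm: "(fst :: spin \<Rightarrow> real) \<in> borel_measurable borel"
    by (intro borel_measurable_continuous_onI continuous_intros)
  have sndm: "(snd :: spin \<Rightarrow> real) \<in> borel_measurable borel"
    by (intro borel_measurable_continuous_onI continuous_intros)
  have m1: "(\<integral>\<omega>. fst (\<omega> r) \<partial>\<mu>) = 0"
    by (rule mean_zero_comp[OF g plx_fin plx_in fx_meas fx_inv Hx fstm]) (simp add: fx_def)
  have m2: "(\<integral>\<omega>. snd (\<omega> r) \<partial>\<mu>) = 0"
    by (rule mean_zero_comp[OF g plz_fin plz_in fz_meas fz_inv Hz sndm]) (simp add: fz_def)
  have "(\<integral>\<omega>. \<omega> r \<partial>\<mu>) = (0 :: spin)"
  proof (rule prod_eqI)
    show "fst (\<integral>\<omega>. \<omega> r \<partial>\<mu>) = fst (0::spin)" using m1 integral_fst[OF int] by simp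
    show "snd (\<integral>\<omega>. \<omega> r \<partial>\<mu>) = snd (0::spin)" using m2 integral_snd[OF int] by simp
  qed
  then show "integrable \<mu> (\<lambda>\<omega>. \<omega> r) \<and> (\<integral>\<omega>. \<omega> r \<partial>\<mu>) = (0 :: spin)" using int by simp
qed


end
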